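(* Let $d\in\mathbb Z^+$, $c>0$, and let $\boldsymbol\beta=(\beta_j)_{j\ge1}$ and $(\Upsilon_{\boldsymbol\nu,\boldsymbol\lambda})_{\boldsymbol\nu\in\mathscr F,\boldsymbol\lambda\in\mathbb Z^d}$ be sequences of non-negative reals such that $\Upsilon_{\boldsymbol\nu,\boldsymbol 0}=\delta_{\boldsymbol\nu,\boldsymbol 0}$; $\Upsilon_{\boldsymbol\nu,\boldsymbol\lambda}=0$ if $|\boldsymbol\nu|<|\boldsymbol\lambda|$ or if $\boldsymbol\lambda$ has a negative entry; and otherwise, for all $j\ge1$, $$\Upsilon_{\boldsymbol\nu+\boldsymbol e_j,\boldsymbol\lambda}\le\beta_j\sum_{k=0}^{\nu_j}c^{k+1}\binom{\nu_j}{k}\sum_{\ell\in\{1,\dots,d\}:\lambda_\ell>0}\Upsilon_{\boldsymbol\nu-k\boldsymbol e_j,\boldsymbol\lambda-\boldsymbol e_\ell}.$$ Then for all $\boldsymbol\nu\in\mathscr F$ and $\boldsymbol\lambda\in\mathbb N_0^d$, $$\Upsilon_{\boldsymbol\nu,\boldsymbol\lambda}\le c^{|\boldsymbol\nu|}\frac{|\boldsymbol\lambda|!}{\boldsymbol\lambda!}\sum_{\boldsymbol m\le\boldsymbol\nu,\,|\boldsymbol m|=|\boldsymbol\lambda|}\boldsymbol\beta^{\boldsymbol m}\prod_{i\ge1}S(\nu_i,m_i).$$ If the recursive inequality is an equality, so is the conclusion.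
   Context: $\mathscr F$ is the set of finitely supported multi-indices in $\mathbb N_0^{\mathbb N}$; $|\boldsymbol\nu|=\sum\nu_j$, $\boldsymbol\lambda!=\prod\lambda_\ell!$, $\boldsymbol\beta^{\boldsymbol m}=\prod\beta_j^{m_j}$, componentwise order; $\boldsymbol e_j$ denotes a unit multi-index (in $\mathscr F$ or in $\mathbb Z^d$ as appropriate); $\delta$ is the Kronecker delta. $S(n,m)=\frac1{m!}\sum_{j=0}^m(-1)^{m-j}\binom mj j^n$ (Stirling numbers of the second kind, $S(0,0)=1$). *)

theory Defs
  imports Complex_Main "HOL-Combinatorics.Stirling"
begin

text \<open>Multi-indices: finitely supported functions nat => nat (index set N is 0-based here).\<close>

definition msupp :: "(nat \<Rightarrow> nat) \<Rightarrow> nat set" where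
  "msupp \<nu> = {i. \<nu> i \<noteq> 0}"

definition multi_indices :: "(nat \<Rightarrow> nat) set" where
  "multi_indices = {\<nu>. finite (msupp \<nu>)}"

definition mabs :: "(nat \<Rightarrow> nat) \<Rightarrow> nat" where
  "mabs \<nu> = (\<Sum>i\<in>msupp \<nu>. \<nu> i)"

definition zvecs :: "nat \<Rightarrow> (nat \<Rightarrow> int) set" where
  "zvecs d = {lam. \<forall>l\<ge>d. lam l = 0}"

definition zabs :: "nat \<Rightarrow> (nat \<Rightarrow> int) \<Rightarrow> int" where
  "zabs d lam = (\<Sum>l<d. lam l)"

definition zfact :: "nat \<Rightarrow> (nat \<Rightarrow> int) \<Rightarrow> nat" where
  "zfact d lam = (\<Prod>l<d. fact (nat (lam l)))"

definition mpow :: "(nat \<Rightarrow> real) \<Rightarrow> (nat \<Rightarrow> nat) \<Rightarrow> real" where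
  "mpow \<beta> m = (\<Prod>i\<in>msupp m. \<beta> i ^ m i)"

definition bound_A4 :: "nat \<Rightarrow> real \<Rightarrow> (nat \<Rightarrow> real) \<Rightarrow> (nat \<Rightarrow> nat) \<Rightarrow> (nat \<Rightarrow> int) \<Rightarrow> real" where
  "bound_A4 d c \<beta> \<nu> lam =
     c ^ mabs \<nu> * (real (fact (nat (zabs d lam))) / real (zfact d lam)) *
     (\<Sum>m\<in>{m. (\<forall>i. m i \<le> \<nu> i) \<and> int (mabs m) = zabs d lam}.
        mpow \<beta> m * (\<Prod>i\<in>msupp \<nu>. real (Stirling (\<nu> i) (m i))))"

definition rec_rhs :: "nat \<Rightarrow> real \<Rightarrow> (nat \<Rightarrow> real) \<Rightarrow> ((nat \<Rightarrow> nat) \<Rightarrow> (nat \<Rightarrow> int) \<Rightarrow> real)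
    \<Rightarrow> (nat \<Rightarrow> nat) \<Rightarrow> (nat \<Rightarrow> int) \<Rightarrow> nat \<Rightarrow> real" where
  "rec_rhs d c \<beta> Y \<nu> lam j =
     \<beta> j * (\<Sum>k=0..\<nu> j. c ^ (k + 1) * real (\<nu> j choose k) *
        (\<Sum>l\<in>{l. l < d \<and> lam l > 0}. Y (\<nu>(j := \<nu> j - k)) (lam(l := lam l - 1))))"

end

theory Submission
  imports Defs
begin

lemma Stirling_sum_aux:
  "Stirling (Suc a) (Suc s) = (\<Sum>i\<le>a. (a choose i) * Stirling i s)"
proof (induction a arbitrary: s)
  case 0
  then show ?case by (cases s) auto
next
  case (Suc a)
  have split: "(\<Sum>i\<le>Suc a. (Suc a choose i) * f i) =
      (\<Sum>i\<le>a. (a choose i) * f i) + (\<Sum>i\<le>a. (a choose i) * f (Suc i))" for f :: "nat \<Rightarrow> nat"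
  proof -
    have "(\<Sum>i\<le>Suc a. (Suc a choose i) * f i) = f 0 + (\<Sum>i\<le>a. (Suc a choose Suc i) * f (Suc i))"
      by (simp only: sum.atMost_Suc_shift) simp
    also have "\<dots> = f 0 + (\<Sum>i\<le>a. (a choose i) * f (Suc i)) + (\<Sum>i\<le>a. (a choose Suc i) * f (Suc i))"
      by (simp add: sum.distrib algebra_simps)
    finally have A: "(\<Sum>i\<le>Suc a. (Suc a choose i) * f i) = f 0 + (\<Sum>i\<le>a. (a choose i) * f (Suc i)) + (\<Sum>i\<le>a. (a choose Suc i) * f (Suc i))" .
    have "f 0 + (\<Sum>i\<le>a. (a choose Suc i) * f (Suc i)) = (\<Sum>i\<le>Suc a. (a choose i) * f i)"
      by (simp only: sum.atMost_Suc_shift) simp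
    also have "\<dots> = (\<Sum>i\<le>a. (a choose i) * f i)" by simp
    finally show ?thesis using A by simp
  qed
  show ?case
  proof (cases s)
    case 0
    have "Stirling (Suc (Suc a)) (Suc s) = Stirling (Suc a) (Suc 0)" using 0 by simp
    also have "\<dots> = (\<Sum>i\<le>a. (a choose i) * Stirling i 0)" by (rule Suc.IH)
    also have "\<dots> = (\<Sum>i\<le>Suc a. (Suc a choose i) * Stirling i 0)"
      unfolding split by simp
    finally show ?thesis using 0 by simp
  next
    case (Suc s')
    have "(\<Sum>i\<le>a. (a choose i) * Stirling (Suc i) (Suc s')) =
        Suc s' * (\<Sum>i\<le>a. (a choose i) * Stirling i (Suc s')) + (\<Sum>i\<le>a. (a choose i) * Stirling i s')"
      by (simp add: sum.distrib sum_distrib_left algebra_simps)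
    have "Stirling (Suc (Suc a)) (Suc s) = Suc s * Stirling (Suc a) (Suc s) + Stirling (Suc a) (Suc s')"
      using Suc by simp
    also have "\<dots> = Suc s * (\<Sum>i\<le>a. (a choose i) * Stirling i s) + (\<Sum>i\<le>a. (a choose i) * Stirling i s')"
      using Suc.IH[of s] Suc.IH[of s'] Suc by simp
    also have "\<dots> = (\<Sum>i\<le>Suc a. (Suc a choose i) * Stirling i s)"
      unfolding split using \<open>(\<Sum>i\<le>a. _) = _\<close> Suc by simp
    finally show ?thesis .
  qed
qed

lemma Stirling_sum:
  "Stirling (Suc a) (Suc s) = (\<Sum>k=0..a. (a choose k) * Stirling (a - k) s)"
proof -
  have "(\<Sum>k=0..a. (a choose k) * Stirling (a - k) s) = (\<Sum>k=0..a. (a choose (a - k)) * Stirling (a - k) s)"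
    by (intro sum.cong refl) (simp add: binomial_symmetric[symmetric])
  also have "\<dots> = (\<Sum>k=0..a. (a choose k) * Stirling k s)"
    by (subst sum.atLeastAtMost_rev) simp
  finally show ?thesis using Stirling_sum_aux[of a s] by (simp add: atLeast0AtMost del: Stirling.simps)
qed

lemma sum_upd: "finite A \<Longrightarrow> l \<in> A \<Longrightarrow> sum (f(l:=x)) A = sum f A - f l + (x::'a::ab_group_add)"
  by (simp add: sum.remove[of A l] algebra_simps cong: sum.cong_simp)

lemma prod_upd: "finite A \<Longrightarrow> l \<in> A \<Longrightarrow> prod (f(l:=x)) A = x * prod f (A - {l})"
  by (simp add: prod.remove[of A l] cong: prod.cong_simp)

lemma msupp_finite: "\<nu> \<in> multi_indices \<Longrightarrow> finite (msupp \<nu>)"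
  by (simp add: multi_indices_def)

lemma mabs_eq: "finite A \<Longrightarrow> msupp \<nu> \<subseteq> A \<Longrightarrow> mabs \<nu> = sum \<nu> A"
  unfolding mabs_def by (rule sum.mono_neutral_left) (auto simp: msupp_def)

lemma msupp_le: "(\<forall>i. m i \<le> \<nu> i) \<Longrightarrow> msupp m \<subseteq> msupp \<nu>"
proof
  fix x assume "\<forall>i. m i \<le> \<nu> i" "x \<in> msupp m"
  then show "x \<in> msupp \<nu>" unfolding msupp_def by (metis le_zero_eq mem_Collect_eq)
qed

lemma Mset_finite:
  assumes "\<nu> \<in> multi_indices"
  shows "finite {m. \<forall>i. m i \<le> \<nu> i}"
proof -
  let ?A = "msupp \<nu>"
  have fA: "finite ?A" using assms by (rule msupp_finite)
  have "{m. \<forall>i. m i \<le> \<nu> i} \<subseteq> {f. \<forall>x. (x \<in> ?A \<longrightarrow> f x \<in> {..mabs \<nu>}) \<and> (x \<notin> ?A \<longrightarrow> f x = 0)}"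
  proof (intro subsetI CollectI allI conjI impI)
    fix m x assume "m \<in> {m. \<forall>i. m i \<le> \<nu> i}"
    then have m: "\<forall>i. m i \<le> \<nu> i" by simp
    { assume "x \<in> ?A"
      have "\<nu> x \<le> mabs \<nu>" unfolding mabs_def by (intro member_le_sum) (use fA \<open>x \<in> ?A\<close> in auto)
      then show "m x \<in> {..mabs \<nu>}" using m[rule_format, of x] by simp }
    { assume "x \<notin> ?A" then show "m x = 0" using m[rule_format, of x] by (simp add: msupp_def) }
  qed
  moreover have "finite {f. \<forall>x. (x \<in> ?A \<longrightarrow> f x \<in> {..mabs \<nu>}) \<and> (x \<notin> ?A \<longrightarrow> f x = (0::nat))}"
    by (rule finite_set_of_finite_funs) (use fA in auto)
  ultimately show ?thesis by (rule finite_subset)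
qed


definition Mn :: "(nat \<Rightarrow> nat) \<Rightarrow> nat \<Rightarrow> (nat \<Rightarrow> nat) set" where
  "Mn \<nu> n = {m. (\<forall>i. m i \<le> \<nu> i) \<and> mabs m = n}"

definition G :: "(nat \<Rightarrow> real) \<Rightarrow> (nat \<Rightarrow> nat) \<Rightarrow> nat \<Rightarrow> real" where
  "G \<beta> \<nu> n = (\<Sum>m\<in>Mn \<nu> n. mpow \<beta> m * (\<Prod>i\<in>msupp \<nu>. real (Stirling (\<nu> i) (m i))))"

lemma Mn_finite: "\<nu> \<in> multi_indices \<Longrightarrow> finite (Mn \<nu> n)"
  unfolding Mn_def by (rule finite_subset[OF _ Mset_finite]) auto

lemma w_A:
  assumes "finite A" "msupp \<nu> \<subseteq> A" "\<forall>i. m i \<le> \<nu> i"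
  shows "mpow \<beta> m * (\<Prod>i\<in>msupp \<nu>. real (Stirling (\<nu> i) (m i)))
       = (\<Prod>i\<in>A. \<beta> i ^ m i * real (Stirling (\<nu> i) (m i)))"
proof -
  have sm: "msupp m \<subseteq> A" using msupp_le[OF assms(3)] assms(2) by auto
  have "mpow \<beta> m = (\<Prod>i\<in>A. \<beta> i ^ m i)"
    unfolding mpow_def by (rule prod.mono_neutral_left) (use assms(1) sm in \<open>auto simp: msupp_def\<close>)
  moreover have "(\<Prod>i\<in>msupp \<nu>. real (Stirling (\<nu> i) (m i))) = (\<Prod>i\<in>A. real (Stirling (\<nu> i) (m i)))"
  proof (rule prod.mono_neutral_left)
    show "\<forall>i\<in>A - msupp \<nu>. real (Stirling (\<nu> i) (m i)) = 1"
    proof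
      fix i assume "i \<in> A - msupp \<nu>"
      then have "\<nu> i = 0" by (simp add: msupp_def)
      moreover then have "m i = 0" using assms(3) by (metis le_zero_eq)
      ultimately show "real (Stirling (\<nu> i) (m i)) = 1" by simp
    qed
  qed (use assms in auto)
  ultimately show ?thesis by (simp add: prod.distrib)
qed

lemma mabs_upd:
  assumes "finite A" "msupp m \<subseteq> A" "j \<in> A"
  shows "mabs (m(j:=t)) = mabs m - m j + t"
proof -
  have "msupp (m(j:=t)) \<subseteq> A" using assms by (auto simp: msupp_def)
  then have "mabs (m(j:=t)) = sum (m(j:=t)) A" using assms by (simp add: mabs_eq)
  also have "\<dots> = sum m (A - {j}) + t" using assms by (simp add: sum.remove[of A j] cong: sum.cong_simp)
  finally have 1: "mabs (m(j:=t)) = sum m (A - {j}) + t" .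
  have "sum m A = m j + sum m (A - {j})" using assms by (simp add: sum.remove[of A j])
  then have "sum m (A - {j}) = mabs m - m j" using assms by (simp add: mabs_eq)
  then show ?thesis using 1 by simp
qed

lemma G_split:
  assumes nu: "\<nu> \<in> multi_indices"
  shows "G \<beta> \<nu> n = (\<Sum>t=0..n. \<beta> j ^ t * real (Stirling (\<nu> j) t) * G \<beta> (\<nu>(j:=0)) (n - t))"
proof -
  define A where "A = insert j (msupp \<nu>)"
  define f where "f i a b = \<beta> i ^ b * real (Stirling a b)" for i a b
  let ?\<nu>0 = "\<nu>(j:=0)"
  have fA: "finite A" using msupp_finite[OF nu] by (simp add: A_def)
  have jA: "j \<in> A" by (simp add: A_def)
  have sA: "msupp \<nu> \<subseteq> A" by (auto simp: A_def)
  have s0A: "msupp ?\<nu>0 \<subseteq> A" by (auto simp: A_def msupp_def)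
  have nu0: "?\<nu>0 \<in> multi_indices"
    using msupp_finite[OF nu] unfolding multi_indices_def
    by (auto intro: finite_subset[of _ "msupp \<nu>"] simp: msupp_def)
  have prodA: "(\<Prod>i\<in>A. f i (\<nu> i) (m i)) = f j (\<nu> j) (m j) * (\<Prod>i\<in>A - {j}. f i (\<nu> i) (m i))" for m
    using fA jA by (simp add: prod.remove)
  have L: "G \<beta> \<nu> n = (\<Sum>m\<in>Mn \<nu> n. \<Prod>i\<in>A. f i (\<nu> i) (m i))"
    unfolding G_def f_def by (intro sum.cong refl w_A fA sA) (auto simp: Mn_def)
  have R0: "G \<beta> ?\<nu>0 s = (\<Sum>m\<in>Mn ?\<nu>0 s. \<Prod>i\<in>A - {j}. f i (\<nu> i) (m i))" for s
  proof -
    have "G \<beta> ?\<nu>0 s = (\<Sum>m\<in>Mn ?\<nu>0 s. \<Prod>i\<in>A. f i (?\<nu>0 i) (m i))"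
      unfolding G_def f_def by (intro sum.cong refl w_A fA s0A) (auto simp: Mn_def)
    also have "\<dots> = (\<Sum>m\<in>Mn ?\<nu>0 s. \<Prod>i\<in>A - {j}. f i (\<nu> i) (m i))"
    proof (intro sum.cong refl)
      fix m assume "m \<in> Mn ?\<nu>0 s"
      then have "m j = 0" unfolding Mn_def by (metis (mono_tags) fun_upd_same le_zero_eq mem_Collect_eq)
      then show "(\<Prod>i\<in>A. f i (?\<nu>0 i) (m i)) = (\<Prod>i\<in>A - {j}. f i (\<nu> i) (m i))"
        using fA jA by (simp add: prod.remove[of A j] f_def cong: prod.cong_simp)
    qed
    finally show ?thesis .
  qed
  define S where "S = Sigma {0..n} (\<lambda>t. Mn ?\<nu>0 (n - t))"
  have finS: "finite S" unfolding S_def using Mn_finite[OF nu0] by auto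
  have "(\<Sum>t=0..n. \<beta> j ^ t * real (Stirling (\<nu> j) t) * G \<beta> ?\<nu>0 (n - t))
      = (\<Sum>t=0..n. \<Sum>m\<in>Mn ?\<nu>0 (n - t). f j (\<nu> j) t * (\<Prod>i\<in>A - {j}. f i (\<nu> i) (m i)))"
    by (simp add: R0 sum_distrib_left f_def)
  also have "\<dots> = (\<Sum>(t,m)\<in>S. f j (\<nu> j) t * (\<Prod>i\<in>A - {j}. f i (\<nu> i) (m i)))"
    unfolding S_def by (rule sum.Sigma) (use Mn_finite[OF nu0] in auto)
  also have "\<dots> = (\<Sum>m\<in>Mn \<nu> n. \<Prod>i\<in>A. f i (\<nu> i) (m i))"
  proof (rule sum.reindex_bij_witness_not_neutral[where S'="{p\<in>S. fst p > \<nu> j}" and T'="{}"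
        and j="\<lambda>(t,m). m(j:=t)" and i="\<lambda>m. (m j, m(j:=0))"])
    show "finite {p\<in>S. fst p > \<nu> j}" using finS by simp
    fix a assume a: "a \<in> S - {p\<in>S. fst p > \<nu> j}"
    obtain t m where [simp]: "a = (t, m)" by force
    from a have t: "t \<le> n" "t \<le> \<nu> j" and m: "\<forall>i. m i \<le> ?\<nu>0 i" "mabs m = n - t"
      by (auto simp: S_def Mn_def)
    have mj: "m j = 0" using m(1) by (metis fun_upd_same le_zero_eq)
    show "(\<lambda>m. (m j, m(j:=0))) ((\<lambda>(t,m). m(j:=t)) a) = a" using mj by auto
    have "msupp m \<subseteq> A" using msupp_le[OF m(1)] s0A by (rule order_trans)
    then have ma: "mabs (m(j:=t)) = n" using mabs_upd[OF fA _ jA] m(2) mj t by simp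
    have le: "\<forall>i. (m(j:=t)) i \<le> \<nu> i"
    proof
      fix i show "(m(j:=t)) i \<le> \<nu> i" using m(1)[rule_format, of i] t by (cases "i = j") auto
    qed
    then show "(\<lambda>(t,m). m(j:=t)) a \<in> Mn \<nu> n - {}" using le ma t by (auto simp: Mn_def)
  next
    fix b assume b: "b \<in> Mn \<nu> n - {}"
    then have b1: "\<forall>i. b i \<le> \<nu> i" and b2: "mabs b = n" by (auto simp: Mn_def)
    show "(\<lambda>(t,m). m(j:=t)) ((\<lambda>m. (m j, m(j:=0))) b) = b" by simp
    have "msupp b \<subseteq> A" using msupp_le[OF b1] sA by (rule order_trans)
    then have "mabs (b(j:=0)) = n - b j" using mabs_upd[OF fA _ jA] b2 by simp
    moreover have "b j \<le> n" using b2 \<open>msupp b \<subseteq> A\<close> fA jA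
      by (metis mabs_eq member_le_sum zero_le)
    ultimately show "(\<lambda>m. (m j, m(j:=0))) b \<in> S - {p\<in>S. fst p > \<nu> j}"
    proof -
      have bj: "b j \<le> \<nu> j" using b1 by simp
      have le: "\<forall>i. (b(j:=0)) i \<le> ?\<nu>0 i"
      proof
        fix i show "(b(j:=0)) i \<le> ?\<nu>0 i" using b1[rule_format, of i] by (cases "i = j") auto
      qed
      have "(b j, b(j:=0)) \<in> S" unfolding S_def Mn_def
        using le \<open>b j \<le> n\<close> \<open>mabs (b(j:=0)) = n - b j\<close> by simp
      then show ?thesis using bj by simp
    qed
  next
    fix a assume "a \<in> {p\<in>S. fst p > \<nu> j}"
    moreover obtain t m where [simp]: "a = (t, m)" by force
    ultimately show "(case a of (t, m) \<Rightarrow> f j (\<nu> j) t * (\<Prod>i\<in>A - {j}. f i (\<nu> i) (m i))) = 0"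
      by (auto simp: f_def)
  next
    fix a assume "a \<in> S"
    obtain t m where [simp]: "a = (t, m)" by force
    show "(\<Prod>i\<in>A. f i (\<nu> i) (((\<lambda>(t,m). m(j:=t)) a) i)) =
        (case a of (t, m) \<Rightarrow> f j (\<nu> j) t * (\<Prod>i\<in>A - {j}. f i (\<nu> i) (m i)))"
      using fA jA by (simp add: prod.remove[of A j] cong: prod.cong_simp)
  qed auto
  finally show ?thesis using L by simp
qed


lemma MI_upd: "\<nu> \<in> multi_indices \<Longrightarrow> \<nu>(j:=x) \<in> multi_indices"
  unfolding multi_indices_def
  by (auto intro: finite_subset[of _ "insert j (msupp \<nu>)"] simp: msupp_def)

lemma G_rec:
  assumes nu: "\<nu> \<in> multi_indices"
  shows "G \<beta> (\<nu>(j:=\<nu> j+1)) (Suc n) =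
     \<beta> j * (\<Sum>k=0..\<nu> j. real (\<nu> j choose k) * G \<beta> (\<nu>(j:=\<nu> j - k)) n)"
proof -
  let ?\<nu>0 = "\<nu>(j:=0)"
  let ?g = "\<lambda>s. G \<beta> ?\<nu>0 (n - s)"
  have sp: "G \<beta> (\<nu>(j:=x)) N = (\<Sum>t=0..N. \<beta> j ^ t * real (Stirling x t) * G \<beta> ?\<nu>0 (N - t))" for x N
  proof -
    have "\<nu>(j:=x) \<in> multi_indices" by (rule MI_upd[OF nu])
    from G_split[OF this, where \<beta>=\<beta> and n=N and j=j] show ?thesis by simp
  qed
  have "G \<beta> (\<nu>(j:=\<nu> j+1)) (Suc n) =
      (\<Sum>t=0..Suc n. \<beta> j ^ t * real (Stirling (Suc (\<nu> j)) t) * G \<beta> ?\<nu>0 (Suc n - t))"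
    using sp[of "\<nu> j + 1" "Suc n"] by simp
  also have "\<dots> = (\<Sum>s=0..n. \<beta> j ^ Suc s * real (Stirling (Suc (\<nu> j)) (Suc s)) * ?g s)"
    by (subst sum.atLeast0_atMost_Suc_shift) simp
  also have "\<dots> = (\<Sum>s=0..n. \<Sum>k=0..\<nu> j. \<beta> j * (real (\<nu> j choose k) * (\<beta> j ^ s * real (Stirling (\<nu> j - k) s) * ?g s)))"
  proof (intro sum.cong refl)
    fix s
    have "real (Stirling (Suc (\<nu> j)) (Suc s)) = (\<Sum>k=0..\<nu> j. real (\<nu> j choose k) * real (Stirling (\<nu> j - k) s))"
      by (simp only: Stirling_sum of_nat_sum of_nat_mult)
    then show "\<beta> j ^ Suc s * real (Stirling (Suc (\<nu> j)) (Suc s)) * ?g s =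
        (\<Sum>k=0..\<nu> j. \<beta> j * (real (\<nu> j choose k) * (\<beta> j ^ s * real (Stirling (\<nu> j - k) s) * ?g s)))"
      by (simp add: sum_distrib_left sum_distrib_right mult_ac)
  qed
  also have "\<dots> = (\<Sum>k=0..\<nu> j. \<Sum>s=0..n. \<beta> j * (real (\<nu> j choose k) * (\<beta> j ^ s * real (Stirling (\<nu> j - k) s) * ?g s)))"
    by (rule sum.swap)
  also have "\<dots> = \<beta> j * (\<Sum>k=0..\<nu> j. real (\<nu> j choose k) * G \<beta> (\<nu>(j:=\<nu> j - k)) n)"
    unfolding sum_distrib_left
  proof (intro sum.cong refl)
    fix k
    show "(\<Sum>s=0..n. \<beta> j * (real (\<nu> j choose k) * (\<beta> j ^ s * real (Stirling (\<nu> j - k) s) * ?g s))) =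
       (\<beta> j * (real (\<nu> j choose k) * G \<beta> (\<nu>(j:=\<nu> j - k)) n))"
      unfolding sp[of "\<nu> j - k" n] by (simp add: sum_distrib_left mult_ac)
  qed
  finally show ?thesis .
qed


lemma zabs_nonneg: "\<forall>l<d. lam l \<ge> 0 \<Longrightarrow> zabs d lam \<ge> 0"
  unfolding zabs_def by (rule sum_nonneg) auto

lemma bound_G:
  assumes "\<forall>l<d. lam l \<ge> 0"
  shows "bound_A4 d c \<beta> \<nu> lam =
    c ^ mabs \<nu> * (real (fact (nat (zabs d lam))) / real (zfact d lam)) * G \<beta> \<nu> (nat (zabs d lam))"
proof -
  have "{m. (\<forall>i. m i \<le> \<nu> i) \<and> int (mabs m) = zabs d lam} = Mn \<nu> (nat (zabs d lam))"
    using zabs_nonneg[OF assms] unfolding Mn_def by auto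
  then show ?thesis unfolding bound_A4_def G_def by simp
qed

lemma mabs_mono:
  assumes "\<nu> \<in> multi_indices" "\<forall>i. m i \<le> \<nu> i"
  shows "mabs m \<le> mabs \<nu>"
proof -
  have f: "finite (msupp \<nu>)" using assms(1) by (rule msupp_finite)
  have "mabs m = sum m (msupp \<nu>)" using f msupp_le[OF assms(2)] by (rule mabs_eq)
  also have "\<dots> \<le> sum \<nu> (msupp \<nu>)" using assms(2) by (intro sum_mono) auto
  finally show ?thesis by (simp add: mabs_def)
qed

lemma bound_small:
  assumes "\<nu> \<in> multi_indices" "int (mabs \<nu>) < zabs d lam"
  shows "bound_A4 d c \<beta> \<nu> lam = 0"
proof -
  have E: "{m. (\<forall>i. m i \<le> \<nu> i) \<and> int (mabs m) = zabs d lam} = {}"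
  proof (rule ccontr)
    assume "{m. (\<forall>i. m i \<le> \<nu> i) \<and> int (mabs m) = zabs d lam} \<noteq> {}"
    then obtain m where "\<forall>i. m i \<le> \<nu> i" "int (mabs m) = zabs d lam" by auto
    moreover then have "mabs m \<le> mabs \<nu>" using mabs_mono[OF assms(1)] by blast
    ultimately show False using assms(2) by linarith
  qed
  show ?thesis unfolding bound_A4_def E by simp
qed

lemma bound_zero:
  assumes nu: "\<nu> \<in> multi_indices"
  shows "bound_A4 d c \<beta> \<nu> (\<lambda>_. 0) = (if \<nu> = (\<lambda>_. 0) then 1 else 0)"
proof -
  have f: "finite (msupp \<nu>)" using nu by (rule msupp_finite)
  have z: "zabs d (\<lambda>_. 0) = 0" "zfact d (\<lambda>_. 0) = 1" by (simp_all add: zabs_def zfact_def)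
  have M: "Mn \<nu> 0 = {\<lambda>_. 0}"
  proof
    show "Mn \<nu> 0 \<subseteq> {\<lambda>_. 0}"
    proof
      fix m assume "m \<in> Mn \<nu> 0"
      then have m: "\<forall>i. m i \<le> \<nu> i" "mabs m = 0" by (auto simp: Mn_def)
      have "sum m (msupp \<nu>) = 0" using m mabs_eq[OF f msupp_le[OF m(1)]] by simp
      then have "\<forall>i\<in>msupp \<nu>. m i = 0" using f by simp
      moreover have "\<forall>i. i \<notin> msupp \<nu> \<longrightarrow> m i = 0" using m(1) by (auto simp: msupp_def) (metis le_zero_eq)
      ultimately have "m = (\<lambda>_. 0)" by auto
      then show "m \<in> {\<lambda>_. 0}" by simp
    qed
  next
    show "{\<lambda>_. 0} \<subseteq> Mn \<nu> 0" by (simp add: Mn_def mabs_def msupp_def)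
  qed
  have mp: "mpow \<beta> (\<lambda>_. 0) = 1" by (simp add: mpow_def msupp_def)
  have P: "(\<Prod>i\<in>msupp \<nu>. real (Stirling (\<nu> i) 0)) = (if \<nu> = (\<lambda>_. 0) then 1 else 0)"
  proof (cases "\<nu> = (\<lambda>_. 0)")
    case True then show ?thesis by (simp add: msupp_def)
  next
    case False
    then obtain i where "\<nu> i \<noteq> 0" by auto
    then have "i \<in> msupp \<nu>" "real (Stirling (\<nu> i) 0) = 0" by (auto simp: msupp_def gr0_conv_Suc)
    then show ?thesis using f False by (auto intro: prod_zero)
  qed
  have "G \<beta> \<nu> 0 = (if \<nu> = (\<lambda>_. 0) then 1 else 0)"
    unfolding G_def M using mp P by simp
  then show ?thesis using bound_G[of d "\<lambda>_. 0" c \<beta> \<nu>] z by (auto simp: mabs_def msupp_def)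
qed


lemma zfact_pos: "zfact d lam > 0"
  unfolding zfact_def by (simp add: prod_pos)

lemma multinom:
  assumes lam: "lam \<in> zvecs d" "\<forall>l<d. lam l \<ge> 0" "lam \<noteq> (\<lambda>_. 0)"
  shows "(\<Sum>l\<in>{l. l < d \<and> lam l > 0}. real (fact (nat (zabs d (lam(l := lam l - 1))))) / real (zfact d (lam(l := lam l - 1))))
       = real (fact (nat (zabs d lam))) / real (zfact d lam)"
proof -
  let ?L = "{l. l < d \<and> lam l > 0}"
  define N where "N = nat (zabs d lam)"
  have sumN: "(\<Sum>l\<in>?L. real (nat (lam l))) = real N"
  proof -
    have "(\<Sum>l\<in>?L. real (nat (lam l))) = (\<Sum>l<d. real (nat (lam l)))"
      by (rule sum.mono_neutral_left) (use lam(2) in \<open>auto simp: not_less\<close>)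
    also have "\<dots> = real_of_int (\<Sum>l<d. lam l)"
      using lam(2) by (simp add: of_int_sum)
    also have "\<dots> = real N" unfolding N_def zabs_def using zabs_nonneg[OF lam(2)] by (simp add: zabs_def)
    finally show ?thesis .
  qed
  obtain l0 where "lam l0 \<noteq> 0" using lam(3) by auto
  moreover have "l0 < d" using \<open>lam l0 \<noteq> 0\<close> lam(1) by (auto simp: zvecs_def not_less[symmetric])
  ultimately have "l0 < d" "lam l0 > 0" using lam(2) by (auto simp: order_le_less)
  then have "real N \<ge> real (nat (lam l0))" unfolding sumN[symmetric]
    by (intro member_le_sum) auto
  then have N1: "N \<ge> 1" using \<open>lam l0 > 0\<close> by simp
  have trm: "real (fact (nat (zabs d (lam(l := lam l - 1))))) / real (zfact d (lam(l := lam l - 1)))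
      = real (fact (N - 1)) * real (nat (lam l)) / real (zfact d lam)" if l: "l \<in> ?L" for l
  proof -
    have "zabs d (lam(l := lam l - 1)) = zabs d lam - 1"
      unfolding zabs_def using l by (subst sum_upd) auto
    then have za: "nat (zabs d (lam(l := lam l - 1))) = N - 1" unfolding N_def by simp
    have "zfact d lam = fact (nat (lam l)) * (\<Prod>i\<in>{..<d} - {l}. fact (nat (lam i)))"
      unfolding zfact_def using l by (simp add: prod.remove[of "{..<d}" l])
    moreover have "zfact d (lam(l := lam l - 1)) = fact (nat (lam l - 1)) * (\<Prod>i\<in>{..<d} - {l}. fact (nat (lam i)))"
      unfolding zfact_def using l by (simp add: prod.remove[of "{..<d}" l] cong: prod.cong_simp)
    moreover have "fact (nat (lam l)) = nat (lam l) * (fact (nat (lam l - 1)) :: nat)"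
    proof -
      have "nat (lam l - 1) = nat (lam l) - 1" "nat (lam l) > 0" using l by auto
      then show ?thesis by (simp add: fact_reduce)
    qed
    ultimately have "zfact d lam = nat (lam l) * zfact d (lam(l := lam l - 1))" by simp
    then have "real (zfact d lam) = real (nat (lam l)) * real (zfact d (lam(l := lam l - 1)))"
      by (metis of_nat_mult)
    then show ?thesis using za zfact_pos[of d lam] l by (simp add: field_simps)
  qed
  have "(\<Sum>l\<in>?L. real (fact (nat (zabs d (lam(l := lam l - 1))))) / real (zfact d (lam(l := lam l - 1))))
      = (\<Sum>l\<in>?L. real (fact (N - 1)) * real (nat (lam l)) / real (zfact d lam))"
    by (intro sum.cong refl trm)
  also have "\<dots> = real (fact (N - 1)) * real N / real (zfact d lam)"
    by (simp only: sum_divide_distrib[symmetric] sum_distrib_left[symmetric] sumN)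
  also have "real (fact (N - 1)) * real N = real (fact N)"
    using N1 by (simp add: fact_reduce[of N])
  finally show ?thesis unfolding N_def .
qed


lemma zabs_pos:
  assumes lam: "lam \<in> zvecs d" "\<forall>l<d. lam l \<ge> 0" "lam \<noteq> (\<lambda>_. 0)"
  shows "zabs d lam \<ge> 1"
proof -
  obtain l0 where "lam l0 \<noteq> 0" using lam(3) by auto
  moreover have "l0 < d" using \<open>lam l0 \<noteq> 0\<close> lam(1) by (auto simp: zvecs_def not_less[symmetric])
  ultimately have "l0 < d" "lam l0 > 0" using lam(2) by (auto simp: order_le_less)
  then have "lam l0 \<le> zabs d lam" unfolding zabs_def by (intro member_le_sum) (use lam(2) in auto)
  then show ?thesis using \<open>lam l0 > 0\<close> by simp
qed

lemma mabs_upd':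
  assumes "\<nu> \<in> multi_indices"
  shows "mabs (\<nu>(j:=t)) = mabs \<nu> - \<nu> j + t" and "\<nu> j \<le> mabs \<nu>"
proof -
  let ?A = "insert j (msupp \<nu>)"
  have f: "finite ?A" using msupp_finite[OF assms] by simp
  show "mabs (\<nu>(j:=t)) = mabs \<nu> - \<nu> j + t" by (rule mabs_upd[OF f]) auto
  have "mabs \<nu> = sum \<nu> ?A" by (rule mabs_eq[OF f]) auto
  moreover have "\<nu> j \<le> sum \<nu> ?A" using f by (intro member_le_sum) auto
  ultimately show "\<nu> j \<le> mabs \<nu>" by simp
qed

lemma bound_rec:
  assumes nu: "\<nu> \<in> multi_indices"
    and lam: "lam \<in> zvecs d" "\<forall>l<d. lam l \<ge> 0" "lam \<noteq> (\<lambda>_. 0)"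
  shows "bound_A4 d c \<beta> (\<nu>(j:=\<nu> j+1)) lam = rec_rhs d c \<beta> (bound_A4 d c \<beta>) \<nu> lam j"
proof -
  let ?L = "{l. l < d \<and> lam l > 0}"
  define N where "N = nat (zabs d lam)"
  define M where "M = real (fact N) / real (zfact d lam)"
  have N1: "N \<ge> 1" using zabs_pos[OF lam] unfolding N_def by simp
  have mj: "\<nu> j \<le> mabs \<nu>" by (rule mabs_upd'(2)[OF nu])
  have inner: "(\<Sum>l\<in>?L. bound_A4 d c \<beta> (\<nu>(j:=\<nu> j - k)) (lam(l := lam l - 1)))
      = c ^ (mabs \<nu> - k) * G \<beta> (\<nu>(j:=\<nu> j - k)) (N - 1) * M" if k: "k \<le> \<nu> j" for k
  proof -
    have ma: "mabs (\<nu>(j:=\<nu> j - k)) = mabs \<nu> - k" using mabs_upd'(1)[OF nu, of j "\<nu> j - k"] k mj by simp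
    have "(\<Sum>l\<in>?L. bound_A4 d c \<beta> (\<nu>(j:=\<nu> j - k)) (lam(l := lam l - 1)))
        = (\<Sum>l\<in>?L. c ^ (mabs \<nu> - k) * G \<beta> (\<nu>(j:=\<nu> j - k)) (N - 1) *
             (real (fact (nat (zabs d (lam(l := lam l - 1))))) / real (zfact d (lam(l := lam l - 1)))))"
    proof (intro sum.cong refl)
      fix l assume l: "l \<in> ?L"
      have nn: "\<forall>i<d. (lam(l := lam l - 1)) i \<ge> 0" using lam(2) l by auto
      have "zabs d (lam(l := lam l - 1)) = zabs d lam - 1"
        unfolding zabs_def using l by (subst sum_upd) auto
      then have za: "nat (zabs d (lam(l := lam l - 1))) = N - 1" unfolding N_def by simp
      show "bound_A4 d c \<beta> (\<nu>(j:=\<nu> j - k)) (lam(l := lam l - 1)) =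
          c ^ (mabs \<nu> - k) * G \<beta> (\<nu>(j:=\<nu> j - k)) (N - 1) *
             (real (fact (nat (zabs d (lam(l := lam l - 1))))) / real (zfact d (lam(l := lam l - 1))))"
        unfolding bound_G[OF nn] ma za by simp
    qed
    also have "\<dots> = c ^ (mabs \<nu> - k) * G \<beta> (\<nu>(j:=\<nu> j - k)) (N - 1) * M"
      unfolding sum_distrib_left[symmetric] multinom[OF lam] M_def N_def ..
    finally show ?thesis .
  qed
  have "rec_rhs d c \<beta> (bound_A4 d c \<beta>) \<nu> lam j =
      \<beta> j * (\<Sum>k=0..\<nu> j. c ^ (k + 1) * real (\<nu> j choose k) * (c ^ (mabs \<nu> - k) * G \<beta> (\<nu>(j:=\<nu> j - k)) (N - 1) * M))"
    unfolding rec_rhs_def by (intro arg_cong[where f="\<lambda>x. \<beta> j * x"] sum.cong refl) (simp add: inner)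
  also have "\<dots> = \<beta> j * (\<Sum>k=0..\<nu> j. c ^ (mabs \<nu> + 1) * M * (real (\<nu> j choose k) * G \<beta> (\<nu>(j:=\<nu> j - k)) (N - 1)))"
  proof (intro arg_cong[where f="\<lambda>x. \<beta> j * x"] sum.cong refl)
    fix k assume "k \<in> {0..\<nu> j}"
    then have "c ^ (k + 1) * c ^ (mabs \<nu> - k) = c ^ (mabs \<nu> + 1)" using mj by (simp add: power_add[symmetric])
    then show "c ^ (k + 1) * real (\<nu> j choose k) * (c ^ (mabs \<nu> - k) * G \<beta> (\<nu>(j:=\<nu> j - k)) (N - 1) * M) =
        c ^ (mabs \<nu> + 1) * M * (real (\<nu> j choose k) * G \<beta> (\<nu>(j:=\<nu> j - k)) (N - 1))"
      by (metis (no_types, lifting) mult.assoc mult.commute mult.left_commute)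
  qed
  also have "\<dots> = c ^ (mabs \<nu> + 1) * M * G \<beta> (\<nu>(j:=\<nu> j+1)) (Suc (N - 1))"
    unfolding G_rec[OF nu] by (simp add: sum_distrib_left mult_ac)
  also have "\<dots> = bound_A4 d c \<beta> (\<nu>(j:=\<nu> j+1)) lam"
    unfolding bound_G[OF lam(2)] M_def N_def[symmetric] using N1 mabs_upd'(1)[OF nu, of j "\<nu> j + 1"] mj by simp
  finally show ?thesis ..
qed


lemma rec_lin:
  "rec_rhs d c \<beta> (\<lambda>a b. Y a b - B a b) \<nu> lam j = rec_rhs d c \<beta> Y \<nu> lam j - rec_rhs d c \<beta> B \<nu> lam j"
  unfolding rec_rhs_def by (simp add: sum_subtractf right_diff_distrib)

lemma Z_le:
  fixes Z :: "(nat \<Rightarrow> nat) \<Rightarrow> (nat \<Rightarrow> int) \<Rightarrow> real"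
  assumes c: "c > 0" and beta: "\<And>j. \<beta> j \<ge> 0"
    and base0: "\<And>\<nu>. \<nu> \<in> multi_indices \<Longrightarrow> Z \<nu> (\<lambda>_. 0) \<le> 0"
    and small: "\<And>\<nu> lam. \<nu> \<in> multi_indices \<Longrightarrow> lam \<in> zvecs d \<Longrightarrow> \<forall>l<d. lam l \<ge> 0 \<Longrightarrow>
        int (mabs \<nu>) < zabs d lam \<Longrightarrow> Z \<nu> lam \<le> 0"
    and rec: "\<And>\<nu> lam j. \<nu> \<in> multi_indices \<Longrightarrow> lam \<in> zvecs d \<Longrightarrow> lam \<noteq> (\<lambda>_. 0) \<Longrightarrow>
        \<forall>l<d. lam l \<ge> 0 \<Longrightarrow> zabs d lam \<le> int (mabs \<nu>) + 1 \<Longrightarrow>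
        Z (\<nu>(j:=\<nu> j+1)) lam \<le> rec_rhs d c \<beta> Z \<nu> lam j"
  shows "\<nu> \<in> multi_indices \<Longrightarrow> lam \<in> zvecs d \<Longrightarrow> \<forall>l<d. lam l \<ge> 0 \<Longrightarrow> Z \<nu> lam \<le> 0"
proof (induction "mabs \<nu>" arbitrary: \<nu> lam rule: less_induct)
  case less
  note nu = less.prems(1) and lam = less.prems(2,3)
  show ?case
  proof (cases "lam = (\<lambda>_. 0)")
    case True then show ?thesis using base0[OF nu] by simp
  next
    case lam0: False
    show ?thesis
    proof (cases "int (mabs \<nu>) < zabs d lam")
      case True then show ?thesis using small nu lam by blast
    next
      case False
      then have le: "zabs d lam \<le> int (mabs \<nu>)" by simp
      have "zabs d lam \<ge> 1" using zabs_pos[OF lam lam0] .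
      then have m1: "mabs \<nu> \<ge> 1" using le by simp
      obtain j where j: "\<nu> j > 0"
      proof (rule ccontr)
        assume "\<not> thesis"
        then have "\<forall>j. \<nu> j = 0" using that by auto
        then have "mabs \<nu> = 0" by (simp add: mabs_def msupp_def)
        then show False using m1 by simp
      qed
      define \<nu>' where "\<nu>' = \<nu>(j:=\<nu> j - 1)"
      have nu': "\<nu>' \<in> multi_indices" unfolding \<nu>'_def by (rule MI_upd[OF nu])
      have eq: "\<nu>'(j:=\<nu>' j + 1) = \<nu>" unfolding \<nu>'_def using j by auto
      have ma': "mabs \<nu>' = mabs \<nu> - 1" unfolding \<nu>'_def
        using mabs_upd'(1)[OF nu, of j "\<nu> j - 1"] mabs_upd'(2)[OF nu, where j=j] j by simp
      have "Z \<nu> lam = Z (\<nu>'(j:=\<nu>' j + 1)) lam" using eq by simp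
      also have "\<dots> \<le> rec_rhs d c \<beta> Z \<nu>' lam j"
        by (rule rec[OF nu' lam(1) lam0 lam(2)]) (use le ma' m1 in simp)
      also have "\<dots> \<le> 0"
        unfolding rec_rhs_def
      proof (intro mult_nonneg_nonpos beta sum_nonpos)
        fix k l assume k: "k \<in> {0..\<nu>' j}" and l: "l \<in> {l. l < d \<and> lam l > 0}"
        have "mabs (\<nu>'(j:=\<nu>' j - k)) \<le> mabs \<nu>'"
          using mabs_upd'(1)[OF nu', of j "\<nu>' j - k"] mabs_upd'(2)[OF nu', where j=j] by simp
        then have lt: "mabs (\<nu>'(j:=\<nu>' j - k)) < mabs \<nu>" using ma' m1 by simp
        show "Z (\<nu>'(j:=\<nu>' j - k)) (lam(l := lam l - 1)) \<le> 0"
        proof (rule less.hyps[OF lt])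
          show "\<nu>'(j:=\<nu>' j - k) \<in> multi_indices" by (rule MI_upd[OF nu'])
          show "lam(l := lam l - 1) \<in> zvecs d" using lam(1) l by (auto simp: zvecs_def)
          show "\<forall>i<d. (lam(l := lam l - 1)) i \<ge> 0" using lam(2) l by auto
        qed
      next
        fix k assume "k \<in> {0..\<nu>' j}"
        show "0 \<le> c ^ (k + 1) * real (\<nu>' j choose k)" using c by simp
      qed
      finally show ?thesis .
    qed
  qed
qed


theorem lemmaA4:
  fixes d :: nat and c :: real and \<beta> :: "nat \<Rightarrow> real"
    and Y :: "(nat \<Rightarrow> nat) \<Rightarrow> (nat \<Rightarrow> int) \<Rightarrow> real"
  assumes d: "d \<ge> 1" and c: "c > 0"
    and beta_nonneg: "\<And>j. \<beta> j \<ge> 0"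
    and Y_nonneg: "\<And>\<nu> lam. \<nu> \<in> multi_indices \<Longrightarrow> lam \<in> zvecs d \<Longrightarrow> Y \<nu> lam \<ge> 0"
    and Y_zero: "\<And>\<nu>. \<nu> \<in> multi_indices \<Longrightarrow> Y \<nu> (\<lambda>_. 0) = (if \<nu> = (\<lambda>_. 0) then 1 else 0)"
    and Y_small: "\<And>\<nu> lam. \<nu> \<in> multi_indices \<Longrightarrow> lam \<in> zvecs d \<Longrightarrow>
         int (mabs \<nu>) < zabs d lam \<Longrightarrow> Y \<nu> lam = 0"
    and Y_neg: "\<And>\<nu> lam. \<nu> \<in> multi_indices \<Longrightarrow> lam \<in> zvecs d \<Longrightarrow>
         (\<exists>l<d. lam l < 0) \<Longrightarrow> Y \<nu> lam = 0"
  shows "((\<forall>\<nu>\<in>multi_indices. \<forall>lam\<in>zvecs d. \<forall>j.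
            lam \<noteq> (\<lambda>_. 0) \<and> (\<forall>l<d. lam l \<ge> 0) \<and> zabs d lam \<le> int (mabs \<nu>) + 1 \<longrightarrow>
            Y (\<nu>(j := \<nu> j + 1)) lam \<le> rec_rhs d c \<beta> Y \<nu> lam j)
         \<longrightarrow> (\<forall>\<nu>\<in>multi_indices. \<forall>lam\<in>zvecs d. (\<forall>l<d. lam l \<ge> 0) \<longrightarrow>
              Y \<nu> lam \<le> bound_A4 d c \<beta> \<nu> lam))
     \<and> ((\<forall>\<nu>\<in>multi_indices. \<forall>lam\<in>zvecs d. \<forall>j.
            lam \<noteq> (\<lambda>_. 0) \<and> (\<forall>l<d. lam l \<ge> 0) \<and> zabs d lam \<le> int (mabs \<nu>) + 1 \<longrightarrow>
            Y (\<nu>(j := \<nu> j + 1)) lam = rec_rhs d c \<beta> Y \<nu> lam j)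
         \<longrightarrow> (\<forall>\<nu>\<in>multi_indices. \<forall>lam\<in>zvecs d. (\<forall>l<d. lam l \<ge> 0) \<longrightarrow>
              Y \<nu> lam = bound_A4 d c \<beta> \<nu> lam))"
proof -
  let ?B = "bound_A4 d c \<beta>"
  have base: "\<And>\<nu>. \<nu> \<in> multi_indices \<Longrightarrow> Y \<nu> (\<lambda>_. 0) = ?B \<nu> (\<lambda>_. 0)"
    using Y_zero bound_zero by simp
  have sm: "\<And>\<nu> lam. \<nu> \<in> multi_indices \<Longrightarrow> lam \<in> zvecs d \<Longrightarrow>
        int (mabs \<nu>) < zabs d lam \<Longrightarrow> Y \<nu> lam = ?B \<nu> lam"
    using Y_small bound_small by simp
  have brec: "\<And>\<nu> lam j. \<nu> \<in> multi_indices \<Longrightarrow> lam \<in> zvecs d \<Longrightarrow> lam \<noteq> (\<lambda>_. 0) \<Longrightarrow>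
        \<forall>l<d. lam l \<ge> 0 \<Longrightarrow> ?B (\<nu>(j:=\<nu> j+1)) lam = rec_rhs d c \<beta> ?B \<nu> lam j"
    by (rule bound_rec)
  have up: "Y \<nu> lam \<le> ?B \<nu> lam"
    if H: "\<forall>\<nu>\<in>multi_indices. \<forall>lam\<in>zvecs d. \<forall>j.
            lam \<noteq> (\<lambda>_. 0) \<and> (\<forall>l<d. lam l \<ge> 0) \<and> zabs d lam \<le> int (mabs \<nu>) + 1 \<longrightarrow>
            Y (\<nu>(j := \<nu> j + 1)) lam \<le> rec_rhs d c \<beta> Y \<nu> lam j"
    and nl: "\<nu> \<in> multi_indices" "lam \<in> zvecs d" "\<forall>l<d. lam l \<ge> 0" for \<nu> lam
  proof -
    have "Y \<nu> lam - ?B \<nu> lam \<le> 0"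
    proof (rule Z_le[OF c beta_nonneg, where Z="\<lambda>a b. Y a b - ?B a b" and d=d])
      show "\<And>\<nu>. \<nu> \<in> multi_indices \<Longrightarrow> Y \<nu> (\<lambda>_. 0) - ?B \<nu> (\<lambda>_. 0) \<le> 0" using base by simp
      show "\<And>\<nu> lam. \<nu> \<in> multi_indices \<Longrightarrow> lam \<in> zvecs d \<Longrightarrow> \<forall>l<d. lam l \<ge> 0 \<Longrightarrow>
        int (mabs \<nu>) < zabs d lam \<Longrightarrow> Y \<nu> lam - ?B \<nu> lam \<le> 0" using sm by simp
      fix \<nu> lam j assume a: "\<nu> \<in> multi_indices" "lam \<in> zvecs d" "lam \<noteq> (\<lambda>_. 0)"
        "\<forall>l<d. lam l \<ge> 0" "zabs d lam \<le> int (mabs \<nu>) + 1"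
      have "Y (\<nu>(j:=\<nu> j+1)) lam \<le> rec_rhs d c \<beta> Y \<nu> lam j" using H a by blast
      then show "Y (\<nu>(j:=\<nu> j+1)) lam - ?B (\<nu>(j:=\<nu> j+1)) lam \<le> rec_rhs d c \<beta> (\<lambda>a b. Y a b - ?B a b) \<nu> lam j"
        unfolding rec_lin brec[OF a(1-4)] by simp
    qed (use nl in auto)
    then show ?thesis by simp
  qed
  have eqp: "Y \<nu> lam = ?B \<nu> lam"
    if H: "\<forall>\<nu>\<in>multi_indices. \<forall>lam\<in>zvecs d. \<forall>j.
            lam \<noteq> (\<lambda>_. 0) \<and> (\<forall>l<d. lam l \<ge> 0) \<and> zabs d lam \<le> int (mabs \<nu>) + 1 \<longrightarrow>
            Y (\<nu>(j := \<nu> j + 1)) lam = rec_rhs d c \<beta> Y \<nu> lam j"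
    and nl: "\<nu> \<in> multi_indices" "lam \<in> zvecs d" "\<forall>l<d. lam l \<ge> 0" for \<nu> lam
  proof -
    have "Y \<nu> lam \<le> ?B \<nu> lam" by (rule up) (use H nl in auto)
    moreover have "?B \<nu> lam - Y \<nu> lam \<le> 0"
    proof (rule Z_le[OF c beta_nonneg, where Z="\<lambda>a b. ?B a b - Y a b" and d=d])
      show "\<And>\<nu>. \<nu> \<in> multi_indices \<Longrightarrow> ?B \<nu> (\<lambda>_. 0) - Y \<nu> (\<lambda>_. 0) \<le> 0" using base by simp
      show "\<And>\<nu> lam. \<nu> \<in> multi_indices \<Longrightarrow> lam \<in> zvecs d \<Longrightarrow> \<forall>l<d. lam l \<ge> 0 \<Longrightarrow>
        int (mabs \<nu>) < zabs d lam \<Longrightarrow> ?B \<nu> lam - Y \<nu> lam \<le> 0" using sm by simp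
      fix \<nu> lam j assume a: "\<nu> \<in> multi_indices" "lam \<in> zvecs d" "lam \<noteq> (\<lambda>_. 0)"
        "\<forall>l<d. lam l \<ge> 0" "zabs d lam \<le> int (mabs \<nu>) + 1"
      have "Y (\<nu>(j:=\<nu> j+1)) lam = rec_rhs d c \<beta> Y \<nu> lam j" using H a by blast
      then show "?B (\<nu>(j:=\<nu> j+1)) lam - Y (\<nu>(j:=\<nu> j+1)) lam \<le> rec_rhs d c \<beta> (\<lambda>a b. ?B a b - Y a b) \<nu> lam j"
        unfolding rec_lin brec[OF a(1-4)] by simp
    qed (use nl in auto)
    ultimately show ?thesis by simp
  qed
  show ?thesis using up eqp by blast
qed

end
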